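(* Let $\mathcal{U}$ be a subspace of $\mathbb{R}^n$. The following are equivalent: (1) $\mathcal{U}$ is recoverable by MTFA; (2) $\mathcal{U}$ is realizable; (3) $\mathcal{U}^\perp$ has the ellipsoid fitting property.
   Context: Minimum trace factor analysis (MTFA) with input a symmetric $n\times n$ matrix $X$ is the semidefinite program: minimize $\operatorname{tr}(L)$ over pairs $(D,L)$ of $n\times n$ symmetric matrices subject to $X=D+L$, $L$ positive semidefinite, $D$ diagonal. A subspace $\mathcal{U}\subseteq\mathbb{R}^n$ is recoverable by MTFA if for every diagonal $D^\star$ and every positive semidefinite $L^\star$ with column space equal to $\mathcal{U}$, the pair $(D^\star,L^\star)$ is the unique optimal solution of MTFA with input $X=D^\star+L^\star$. A correlation matrix is a positive semidefinite matrix with all diagonal entries equal to $1$. A subspace $\mathcal{U}\subseteq\mathbb{R}^n$ is realizable if there is an $n\times n$ correlation matrix $Q$ whose nullspace contains $\mathcal{U}$. A centered ellipsoid in $\mathbb{R}^k$ is described by a symmetric positive semidefinite $k\times k$ matrix $M$, and it passes through $v\in\mathbb{R}^k$ if $v^TMv=1$. A subspace $\mathcal{V}\subseteq\mathbb{R}^n$ has the ellipsoid fitting property if there is a $k\times n$ matrix $V$ (for some $k$) with row space $\mathcal{V}$ and a centered ellipsoid in $\mathbb{R}^k$ passing through every column of $V$. *)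

theory Defs
  imports "HOL-Analysis.Analysis"
begin

definition symmetric_mat :: "real^'n^'n \<Rightarrow> bool" where
  "symmetric_mat A \<longleftrightarrow> transpose A = A"

definition psd :: "real^'n^'n \<Rightarrow> bool" where
  "psd A \<longleftrightarrow> symmetric_mat A \<and> (\<forall>x. 0 \<le> x \<bullet> (A *v x))"

definition diagonal_mat :: "real^'n^'n \<Rightarrow> bool" where
  "diagonal_mat D \<longleftrightarrow> (\<forall>i j. i \<noteq> j \<longrightarrow> D $ i $ j = 0)"

definition col_space :: "real^'n^'n \<Rightarrow> (real^'n) set" where
  "col_space A = range (\<lambda>x. A *v x)"

definition null_space :: "real^'n^'n \<Rightarrow> (real^'n) set" where
  "null_space A = {x. A *v x = 0}"

definition mtfa_feasible :: "real^'n^'n \<Rightarrow> real^'n^'n \<Rightarrow> real^'n^'n \<Rightarrow> bool" where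
  "mtfa_feasible X D L \<longleftrightarrow> symmetric_mat D \<and> symmetric_mat L \<and>
     X = D + L \<and> psd L \<and> diagonal_mat D"

definition mtfa_unique_opt :: "real^'n^'n \<Rightarrow> real^'n^'n \<Rightarrow> real^'n^'n \<Rightarrow> bool" where
  "mtfa_unique_opt X D L \<longleftrightarrow> mtfa_feasible X D L \<and>
     (\<forall>D' L'. mtfa_feasible X D' L' \<longrightarrow> trace L \<le> trace L') \<and>
     (\<forall>D' L'. mtfa_feasible X D' L' \<and> trace L' = trace L \<longrightarrow> D' = D \<and> L' = L)"

definition recoverable :: "(real^'n) set \<Rightarrow> bool" where
  "recoverable U \<longleftrightarrow> (\<forall>D L. diagonal_mat D \<and> psd L \<and> col_space L = U \<longrightarrow>
      mtfa_unique_opt (D + L) D L)"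

definition correlation_mat :: "real^'n^'n \<Rightarrow> bool" where
  "correlation_mat Q \<longleftrightarrow> psd Q \<and> (\<forall>i. Q $ i $ i = 1)"

definition realizable :: "(real^'n) set \<Rightarrow> bool" where
  "realizable U \<longleftrightarrow> (\<exists>Q. correlation_mat Q \<and> U \<subseteq> null_space Q)"

(* A k x k matrix (k arbitrary) is represented as M :: nat => nat => real on indices < k. *)
definition psd_k :: "nat \<Rightarrow> (nat \<Rightarrow> nat \<Rightarrow> real) \<Rightarrow> bool" where
  "psd_k k M \<longleftrightarrow> (\<forall>i<k. \<forall>j<k. M i j = M j i) \<and>
     (\<forall>x::nat \<Rightarrow> real. 0 \<le> (\<Sum>i<k. \<Sum>j<k. x i * M i j * x j))"

(* A k x n matrix V is represented by the list of its k rows (vectors in R^n);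
   column j of V is the vector (rows ! i $ j)_{i<k} in R^k.
   The centered ellipsoid given by M passes through v iff v^T M v = 1. *)
definition ellipsoid_fitting :: "(real^'n) set \<Rightarrow> bool" where
  "ellipsoid_fitting W \<longleftrightarrow> (\<exists>(rows :: (real^'n) list) M.
     span (set rows) = W \<and> psd_k (length rows) M \<and>
     (\<forall>j. (\<Sum>i<length rows. \<Sum>l<length rows.
              (rows ! i) $ j * M i l * (rows ! l) $ j) = 1))"

end

theory Submission
  imports Defs
begin


lemma sym_iff: "symmetric_mat A \<longleftrightarrow> (\<forall>i j. A$i$j = A$j$i)"
  by (auto simp: symmetric_mat_def transpose_def vec_eq_iff)

lemma inner_sym:
  assumes "symmetric_mat A" shows "x \<bullet> (A *v y) = (A *v x) \<bullet> y"
  using dot_lmul_matrix[of x A y] assms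
  by (metis symmetric_mat_def vector_transpose_matrix)

lemma quad_add:
  assumes "symmetric_mat A"
  shows "(x + t *\<^sub>R z) \<bullet> (A *v (x + t *\<^sub>R z)) =
     x \<bullet> (A *v x) + 2*t*(z \<bullet> (A *v x)) + t^2 * (z \<bullet> (A *v z))"
proof -
  have "x \<bullet> (A *v z) = z \<bullet> (A *v x)"
    using inner_sym[OF assms, of x z] by (simp add: inner_commute)
  then show ?thesis
    by (simp add: algebra_simps inner_add_left inner_add_right power2_eq_square)
qed

lemma psd_quad_zero:
  assumes "psd A" "x \<bullet> (A *v x) = 0" shows "A *v x = 0"
proof -
  define y where "y = A *v x"
  have s: "symmetric_mat A" using assms psd_def by blast
  define a where "a = y \<bullet> y"
  define c where "c = y \<bullet> (A *v y)"
  have c0: "c \<ge> 0" using assms(1) unfolding psd_def c_def by blast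
  have a0: "a \<ge> 0" unfolding a_def by simp
  have h: "\<And>t. 0 \<le> -2*t*a + t^2 * c"
  proof -
    fix t
    have "0 \<le> (x + (-t) *\<^sub>R y) \<bullet> (A *v (x + (-t) *\<^sub>R y))"
      using assms(1) unfolding psd_def by blast
    also have "\<dots> = -2*t*a + t^2 * c"
      unfolding quad_add[OF s] using assms(2) by (simp add: a_def c_def y_def)
    finally show "0 \<le> -2*t*a + t^2 * c" .
  qed
  define t where "t = a/(c+1)"
  have t0: "t \<ge> 0" using a0 c0 by (simp add: t_def)
  have tc: "t * c \<le> a" using a0 c0 by (simp add: t_def field_simps)
  have "0 \<le> -2*t*a + t^2 * c" by (rule h)
  also have "\<dots> = t * (-2*a + t*c)" by (simp add: power2_eq_square algebra_simps)
  also have "\<dots> \<le> t * (-a)" using t0 tc by (intro mult_left_mono) auto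
  finally have "t * a \<le> 0" by simp
  moreover have "t * a = a^2/(c+1)" by (simp add: t_def power2_eq_square)
  ultimately have "a^2 \<le> 0" using c0 by (simp add: divide_le_0_iff)
  then have "a = 0" by simp
  then show ?thesis unfolding a_def y_def by simp
qed

definition outer :: "real^'n \<Rightarrow> real^'n^'n" where
  "outer v = (\<chi> i j. v$i * v$j)"

lemma outer_mult: "outer v *v x = (v \<bullet> x) *\<^sub>R v"
  by (simp add: outer_def matrix_vector_mult_def inner_vec_def vec_eq_iff sum_distrib_left mult_ac)

lemma mv_sum: "(\<Sum>i\<in>I. F i) *v x = (\<Sum>i\<in>I. F i *v x)"
  by (simp add: matrix_vector_mult_def vec_eq_iff sum_distrib_right sum.swap[of _ I])

lemma sum_sym: "(\<And>i. i \<in> I \<Longrightarrow> symmetric_mat (F i)) \<Longrightarrow> symmetric_mat (\<Sum>i\<in>I. F i)"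
  by (simp add: sym_iff)

lemma outer_sym: "symmetric_mat (c *\<^sub>R outer v)"
  by (simp add: sym_iff outer_def mult.commute)

lemma axis_mv: "(A *v axis k 1) $ i = A$i$k"
  by (simp add: matrix_vector_mult_def axis_def if_distrib cong: if_cong)

lemma axis_inner: "axis k 1 \<bullet> (y::real^'n) = y$k"
  by (simp add: inner_axis')



lemma schur_step:
  assumes "psd A" "A$k$k > 0"
  shows "((A *v x)$k)^2 \<le> A$k$k * (x \<bullet> (A *v x))"
proof -
  have s: "symmetric_mat A" using assms psd_def by blast
  define p where "p = (A *v x)$k"
  define a where "a = A$k$k"
  define t where "t = - p / a"
  have "0 \<le> (x + t *\<^sub>R axis k 1) \<bullet> (A *v (x + t *\<^sub>R axis k 1))"
    using assms(1) unfolding psd_def by blast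
  also have "\<dots> = x \<bullet> (A *v x) + 2*t*p + t^2*a"
    unfolding quad_add[OF s] by (simp add: axis_inner axis_mv p_def a_def)
  also have "\<dots> = x \<bullet> (A *v x) - p^2/a"
    using assms(2) by (simp add: t_def a_def field_simps power2_eq_square)
  finally have "p^2/a \<le> x \<bullet> (A *v x)" by simp
  then show ?thesis using assms(2)
    by (simp add: p_def a_def divide_le_eq mult.commute)
qed

lemma psd_factor_aux:
  assumes "finite S"
  shows "\<forall>A::real^'n^'n. psd A \<and> (\<forall>i j. i \<notin> S \<or> j \<notin> S \<longrightarrow> A$i$j = 0)
           \<longrightarrow> (\<exists>(m::nat) V. A = (\<Sum>k<m. outer (V k)))"
  using assms
proof (induction S rule: finite_induct)
  case empty
  show ?case
  proof (intro allI impI)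
    fix A :: "real^'n^'n"
    assume "psd A \<and> (\<forall>i j. i \<notin> {} \<or> j \<notin> {} \<longrightarrow> A $ i $ j = 0)"
    then have "A = 0" by (simp add: vec_eq_iff)
    then show "\<exists>(m::nat) V. A = (\<Sum>k<m. outer (V k))" by (intro exI[of _ "0::nat"]) simp
  qed
next
  case (insert k S)
  show ?case
  proof (intro allI impI)
    fix A :: "real^'n^'n"
    assume H: "psd A \<and> (\<forall>i j. i \<notin> insert k S \<or> j \<notin> insert k S \<longrightarrow> A $ i $ j = 0)"
    have pA: "psd A" and sA: "\<And>i j. A$i$j = A$j$i" and supp: "\<And>i j. i \<notin> insert k S \<or> j \<notin> insert k S \<Longrightarrow> A $ i $ j = 0"
      using H by (auto simp: psd_def sym_iff)
    have akk: "A$k$k \<ge> 0"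
      using pA unfolding psd_def by (metis axis_inner axis_mv)
    show "\<exists>(m::nat) V. A = (\<Sum>k<m. outer (V k))"
    proof (cases "A$k$k = 0")
      case True
      have "A *v axis k 1 = 0"
        by (rule psd_quad_zero[OF pA]) (simp add: axis_inner axis_mv True)
      then have col: "\<And>i. A$i$k = 0" by (metis axis_mv vec_eq_iff zero_index)
      have "\<forall>i j. i \<notin> S \<or> j \<notin> S \<longrightarrow> A$i$j = 0"
        using supp col sA by (metis insertE)
      then show ?thesis using insert.IH pA by blast
    next
      case False
      define a where "a = A$k$k"
      have a0: "a > 0" using akk False a_def by simp
      define v where "v = (\<chi> j. A$k$j / sqrt a)"
      define A' where "A' = A - outer v"
      have ov: "\<And>i j. outer v $i$j = A$k$i * A$k$j / a"
        using a0 by (simp add: outer_def v_def real_sqrt_mult[symmetric])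
      have sA': "symmetric_mat A'"
        using sA by (simp add: sym_iff A'_def ov mult.commute)
      have qA': "x \<bullet> (A' *v x) \<ge> 0" for x
      proof -
        have "v \<bullet> x = (A *v x)$k / sqrt a"
          by (simp add: v_def inner_vec_def matrix_vector_mult_def sum_divide_distrib)
        then have "(v \<bullet> x)^2 = ((A *v x)$k)^2 / a"
          using a0 by (simp add: power_divide)
        moreover have "x \<bullet> (A' *v x) = x \<bullet> (A *v x) - (v \<bullet> x)^2"
          by (simp add: A'_def matrix_vector_mult_diff_rdistrib outer_mult inner_diff_right power2_eq_square inner_commute)
        moreover have "((A *v x)$k)^2 \<le> a * (x \<bullet> (A *v x))"
          using schur_step[OF pA, of k x] a0 a_def by simp
        ultimately show ?thesis using a0 by (simp add: divide_le_eq mult.commute)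
      qed
      have pA': "psd A'" using sA' qA' by (simp add: psd_def)
      have "\<forall>i j. i \<notin> S \<or> j \<notin> S \<longrightarrow> A'$i$j = 0"
      proof (intro allI impI)
        fix i j assume ij: "i \<notin> S \<or> j \<notin> S"
        show "A'$i$j = 0"
        proof (cases "i = k \<or> j = k")
          case True
          then show ?thesis using a0 sA by (auto simp: A'_def ov a_def)
        next
          case False
          then have "i \<notin> insert k S \<or> j \<notin> insert k S" using ij by auto
          then have "A$i$j = 0 \<and> (A$k$i = 0 \<or> A$k$j = 0)"
            using supp sA by (metis insertI1)
          then show ?thesis by (auto simp: A'_def ov)
        qed
      qed
      then obtain m :: nat and V where mV: "A' = (\<Sum>k<m. outer (V k))"
        using insert.IH pA' by blast
      have "A = (\<Sum>k<Suc m. outer ((V(m := v)) k))"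
        using mV by (simp add: A'_def) (metis diff_add_cancel)
      then show ?thesis by blast
    qed
  qed
qed

lemma psd_factor:
  assumes "psd (A::real^'n^'n)" shows "\<exists>(m::nat) V. A = (\<Sum>k<m. outer (V k))"
  using psd_factor_aux[of "UNIV::'n set"] assms by auto



lemma diag_sym: "diagonal_mat D \<Longrightarrow> symmetric_mat D"
  by (auto simp: diagonal_mat_def sym_iff) (metis)

lemma diag_mv: "diagonal_mat D \<Longrightarrow> (D *v y)$i = D$i$i * y$i"
  unfolding diagonal_mat_def matrix_vector_mult_def
  by (simp add: sum.remove[of UNIV i] sum.neutral)

lemma diag_quad: "diagonal_mat D \<Longrightarrow> x \<bullet> (D *v y) = (\<Sum>j\<in>UNIV. D$j$j * x$j * y$j)"
  by (simp add: inner_vec_def diag_mv mult_ac)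

lemma gram_mv: "(\<Sum>k<m. outer (V k)) *v y = (\<Sum>k<(m::nat). (V k \<bullet> y) *\<^sub>R V k)"
  by (simp add: mv_sum outer_mult)

lemma gram_quad: "y \<bullet> ((\<Sum>k<m. outer (V k)) *v y) = (\<Sum>k<(m::nat). (V k \<bullet> y)^2)"
  by (simp add: gram_mv inner_sum_right inner_commute power2_eq_square)

lemma gram_diag: "(\<Sum>k<m. outer (V k)) $ j $ j = (\<Sum>k<(m::nat). (V k $ j)^2)"
  by (simp add: outer_def power2_eq_square)

lemma realizable_imp_recoverable:
  fixes U :: "(real^'n) set"
  assumes "realizable U" shows "recoverable U"
proof -
  obtain Q where cQ: "correlation_mat Q" and UQ: "U \<subseteq> null_space Q"
    using assms realizable_def by blast
  have pQ: "psd Q" and dQ: "\<And>i. Q$i$i = 1" using cQ correlation_mat_def by auto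
  obtain m :: nat and V where QV: "Q = (\<Sum>k<m. outer (V k))" using psd_factor[OF pQ] by blast
  have Qzero: "V k \<bullet> y = 0" if "y \<in> U" "k < m" for y k
  proof -
    have "Q *v y = 0" using UQ that by (auto simp: null_space_def)
    then have "(\<Sum>k<m. (V k \<bullet> y)^2) = 0" using gram_quad[where y=y and m=m and V=V] QV by simp
    then show ?thesis using that by (simp add: sum_nonneg_eq_0_iff)
  qed
  have QVj: "(\<Sum>k<m. (V k $ j)^2) = 1" for j using dQ[of j] gram_diag[where m=m and V=V and j=j] QV by simp
  show ?thesis unfolding recoverable_def
  proof (intro allI impI)
    fix D L :: "real^'n^'n"
    assume H: "diagonal_mat D \<and> psd L \<and> col_space L = U"
    then have dD: "diagonal_mat D" and pL: "psd L" and cL: "col_space L = U" by auto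
    have sL: "symmetric_mat L" using pL psd_def by blast
    have LU: "L *v x \<in> U" for x using cL unfolding col_space_def by blast
    have feas: "mtfa_feasible (D + L) D L"
      using dD pL sL diag_sym[OF dD] by (simp add: mtfa_feasible_def)
    have key: "trace L' - trace L = (\<Sum>k<m. V k \<bullet> (L' *v V k))
       \<and> (trace L' = trace L \<longrightarrow> D' = D \<and> L' = L)"
      if F: "mtfa_feasible (D + L) D' L'" for D' L'
    proof -
      have dD': "diagonal_mat D'" and pL': "psd L'" and eq: "D + L = D' + L'"
        using F by (auto simp: mtfa_feasible_def)
      define E where "E = D - D'"
      have "L' = (D + L) - D'" using eq by simp
      then have LE: "L' = L + E" unfolding E_def by (simp add: algebra_simps)
      have dE: "diagonal_mat E" using dD dD' by (simp add: E_def diagonal_mat_def)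
      have tr: "trace L' - trace L = (\<Sum>j\<in>UNIV. E$j$j)"
        using LE by (simp add: trace_def sum.distrib)
      have VL: "V k \<bullet> (L *v V k) = 0" if "k < m" for k using Qzero[OF LU that] .
      have "(\<Sum>k<m. V k \<bullet> (L' *v V k)) = (\<Sum>k<m. V k \<bullet> (E *v V k))"
        using VL by (simp add: LE matrix_vector_mult_add_rdistrib inner_add_right)
      also have "\<dots> = (\<Sum>k<m. \<Sum>j\<in>UNIV. E$j$j * (V k $ j)^2)"
        by (simp add: diag_quad[OF dE] power2_eq_square mult_ac)
      also have "\<dots> = (\<Sum>j\<in>UNIV. E$j$j * (\<Sum>k<m. (V k $ j)^2))"
        by (simp add: sum.swap[of _ "{..<m}"] sum_distrib_left)
      also have "\<dots> = (\<Sum>j\<in>UNIV. E$j$j)" by (simp add: QVj)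
      finally have T: "trace L' - trace L = (\<Sum>k<m. V k \<bullet> (L' *v V k))" using tr by simp
      have "D' = D \<and> L' = L" if eqt: "trace L' = trace L"
      proof -
        have nn: "\<And>k. 0 \<le> V k \<bullet> (L' *v V k)" using pL' psd_def by blast
        have "\<forall>k<m. V k \<bullet> (L' *v V k) = 0"
          using T eqt nn by (simp add: sum_nonneg_eq_0_iff)
        then have L'V: "\<And>k. k < m \<Longrightarrow> L' *v V k = 0" using psd_quad_zero[OF pL'] by blast
        have Ejj: "E$j$j = 0" for j
        proof -
          have "E$j$j = (\<Sum>k<m. E$j$j * (V k $ j)^2)"
            using QVj[of j] by (simp add: sum_distrib_left[symmetric])
          also have "\<dots> = (\<Sum>k<m. V k $ j * (E *v V k) $ j)"
            by (simp add: diag_mv[OF dE] power2_eq_square mult_ac)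
          also have "\<dots> = (\<Sum>k<m. - (V k $ j * (L *v V k) $ j))"
          proof (rule sum.cong[OF refl])
            fix k assume "k \<in> {..<m}"
            then have "E *v V k = - (L *v V k)" using L'V[of k] LE
              by (simp add: matrix_vector_mult_add_rdistrib eq_neg_iff_add_eq_0 add.commute)
            then show "V k $ j * (E *v V k) $ j = - (V k $ j * (L *v V k) $ j)" by simp
          qed
          also have "\<dots> = - (\<Sum>k<m. V k $ j * (V k \<bullet> (L *v axis j 1)))"
          proof -
            have "(L *v V k) $ j = V k \<bullet> (L *v axis j 1)" for k
              using inner_sym[OF sL, of "axis j 1" "V k"]
              by (simp add: axis_inner inner_commute)
            then show ?thesis by (simp add: sum_negf)
          qed
          also have "\<dots> = 0" using Qzero[OF LU] by simp
          finally show ?thesis .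
        qed
        have "E = 0" using dE Ejj unfolding diagonal_mat_def by (metis vec_eq_iff zero_index)
        then show ?thesis using LE E_def by simp
      qed
      then show ?thesis using T by blast
    qed
    show "mtfa_unique_opt (D + L) D L"
      unfolding mtfa_unique_opt_def
    proof (intro conjI allI impI)
      show "mtfa_feasible (D + L) D L" by (rule feas)
    next
      fix D' L' assume F: "mtfa_feasible (D + L) D' L'"
      have pL': "psd L'" using F mtfa_feasible_def by blast
      have "0 \<le> (\<Sum>k<m. V k \<bullet> (L' *v V k))"
        using pL' unfolding psd_def by (auto intro: sum_nonneg)
      then show "trace L \<le> trace L'" using key[OF F] by simp
    next
      fix D' L' assume "mtfa_feasible (D + L) D' L' \<and> trace L' = trace L"
      then show "D' = D" "L' = L" using key by blast+
    qed
  qed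
qed



lemma ellipsoid_imp_realizable:
  fixes U :: "(real^'n) set"
  assumes "ellipsoid_fitting (orthogonal_comp U)" shows "realizable U"
proof -
  obtain xs :: "(real^'n) list" and M where
    sp: "span (set xs) = orthogonal_comp U" and pM: "psd_k (length xs) M" and
    el: "\<And>j. (\<Sum>i<length xs. \<Sum>l<length xs. (xs ! i) $ j * M i l * (xs ! l) $ j) = 1"
    using assms unfolding ellipsoid_fitting_def by blast
  define k where "k = length xs"
  have Ms: "\<And>i l. i < k \<Longrightarrow> l < k \<Longrightarrow> M i l = M l i" and
       Mp: "\<And>y. 0 \<le> (\<Sum>i<k. \<Sum>j<k. y i * M i j * y j)"
    using pM unfolding psd_k_def k_def by auto
  define Q :: "real^'n^'n" where
    "Q = (\<chi> a b. \<Sum>i<k. \<Sum>l<k. xs!i$a * M i l * xs!l$b)"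
  have Qmv: "Q *v x = (\<Sum>i<k. \<Sum>l<k. (M i l * (xs!l \<bullet> x)) *\<^sub>R xs!i)" for x
    by (simp add: Q_def vec_eq_iff matrix_vector_mult_def inner_vec_def sum_distrib_left
        sum_distrib_right mult_ac sum.swap[of _ UNIV])
  have sQ: "symmetric_mat Q"
  proof -
    have "Q$a$b = Q$b$a" for a b
    proof -
      have "Q$a$b = (\<Sum>i<k. \<Sum>l<k. xs!i$a * M i l * xs!l$b)" by (simp add: Q_def)
      also have "\<dots> = (\<Sum>l<k. \<Sum>i<k. xs!i$a * M i l * xs!l$b)" by (rule sum.swap)
      also have "\<dots> = (\<Sum>l<k. \<Sum>i<k. xs!l$b * M l i * xs!i$a)"
        by (intro sum.cong refl) (simp add: Ms mult_ac)
      also have "\<dots> = Q$b$a" by (simp add: Q_def)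
      finally show ?thesis .
    qed
    then show ?thesis by (simp add: sym_iff)
  qed
  have qQ: "0 \<le> x \<bullet> (Q *v x)" for x
  proof -
    have "x \<bullet> (Q *v x) = (\<Sum>i<k. \<Sum>l<k. (xs!i \<bullet> x) * M i l * (xs!l \<bullet> x))"
      by (simp add: Qmv inner_sum_right inner_commute mult_ac)
    then show ?thesis using Mp[of "\<lambda>i. xs!i \<bullet> x"] by simp
  qed
  have dQ: "Q$j$j = 1" for j using el[of j] by (simp add: Q_def k_def)
  have nQ: "U \<subseteq> null_space Q"
  proof
    fix u assume u: "u \<in> U"
    have "xs!l \<bullet> u = 0" if "l < k" for l
    proof -
      have "xs!l \<in> orthogonal_comp U" using sp that k_def span_base[of "xs!l" "set xs"] by auto
      then show ?thesis using u by (auto simp: orthogonal_comp_def orthogonal_def inner_commute)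
    qed
    then have "Q *v u = 0" by (simp add: Qmv)
    then show "u \<in> null_space Q" by (simp add: null_space_def)
  qed
  show ?thesis unfolding realizable_def correlation_mat_def psd_def
    using sQ qQ dQ nQ by blast
qed



lemma realizable_imp_ellipsoid:
  fixes U :: "(real^'n) set"
  assumes sU: "subspace U" and "realizable U" shows "ellipsoid_fitting (orthogonal_comp U)"
proof -
  obtain Q where cQ: "correlation_mat Q" and UQ: "U \<subseteq> null_space Q"
    using assms realizable_def by blast
  have pQ: "psd Q" and dQ: "\<And>i. Q$i$i = 1" using cQ correlation_mat_def by auto
  have sQ: "symmetric_mat Q" using pQ psd_def by blast
  have QU: "\<And>u. u \<in> U \<Longrightarrow> Q *v u = 0" using UQ by (auto simp: null_space_def)
  have symM: "\<And>a b. a \<bullet> (Q *v b) = b \<bullet> (Q *v a)"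
    using inner_sym[OF sQ] by (simp add: inner_commute)
  define W where "W = orthogonal_comp U"
  have sW: "subspace W" unfolding W_def by (rule subspace_orthogonal_comp)
  obtain B where BW: "B \<subseteq> W" and oB: "pairwise orthogonal B" and nB: "\<And>x. x \<in> B \<Longrightarrow> norm x = 1"
    and iB: "independent B" and spB: "span B = W"
    using orthonormal_basis_subspace[OF sW] by metis
  have fB: "finite B" using iB independent_imp_finite by blast
  obtain xs where xs: "set xs = B" "distinct xs" using finite_distinct_list[OF fB] by blast
  define k where "k = length xs"
  define M where "M = (\<lambda>i l. xs!i \<bullet> (Q *v xs!l))"
  have listsum: "(\<Sum>i<k. f (xs!i)) = (\<Sum>b\<in>B. f b)" for f :: "real^'n \<Rightarrow> 'b::comm_monoid_add"
  proof -
    have "(\<Sum>i<k. f (xs!i)) = sum_list (map f xs)"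
      by (simp add: sum_list_sum_nth k_def atLeast0LessThan)
    also have "\<dots> = (\<Sum>b\<in>B. f b)" using xs by (metis sum.distinct_set_conv_list)
    finally show ?thesis .
  qed
  have Bin: "\<And>b b'. b \<in> B \<Longrightarrow> b' \<in> B \<Longrightarrow> b' \<bullet> b = (if b = b' then 1 else 0)"
    using oB nB unfolding pairwise_def orthogonal_def
    by (metis norm_eq_1 inner_commute)
  have Qlin: "Q *v (\<Sum>i<k. y i *\<^sub>R xs!i) = (\<Sum>i<k. y i *\<^sub>R (Q *v xs!i))" for y
    by (simp add: linear_sum[OF matrix_vector_mul_linear] matrix_vector_mult_scaleR)
  have psdk: "psd_k k M"
    unfolding psd_k_def
  proof (intro conjI allI impI)
    fix i l assume "i < k" "l < k"
    show "M i l = M l i" unfolding M_def using inner_sym[OF sQ] by (simp add: inner_commute)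
  next
    fix y :: "nat \<Rightarrow> real"
    define z where "z = (\<Sum>i<k. y i *\<^sub>R xs!i)"
    have "z \<bullet> (Q *v z) = (\<Sum>i<k. \<Sum>n<k. y i * (y n * (xs ! n \<bullet> (Q *v xs ! i))))"
      unfolding z_def Qlin
      by (simp add: M_def inner_sum_left inner_sum_right sum_distrib_left mult_ac)
    also have "\<dots> = (\<Sum>n<k. \<Sum>i<k. y i * (y n * (xs ! n \<bullet> (Q *v xs ! i))))"
      by (rule sum.swap)
    also have "\<dots> = (\<Sum>i<k. \<Sum>j<k. y i * M i j * y j)"
      by (simp add: M_def mult_ac)
    finally have "z \<bullet> (Q *v z) = (\<Sum>i<k. \<Sum>j<k. y i * M i j * y j)" .
    then show "0 \<le> (\<Sum>i<k. \<Sum>j<k. y i * M i j * y j)" using pQ psd_def by metis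
  qed
  have ell: "(\<Sum>i<k. \<Sum>l<k. (xs ! i) $ j * M i l * (xs ! l) $ j) = 1" for j
  proof -
    define p where "p = (\<Sum>i<k. (xs!i $ j) *\<^sub>R xs!i)"
    have "p \<bullet> (Q *v p) = (\<Sum>i<k. \<Sum>n<k. xs ! i $ j * (xs ! n $ j * (xs ! n \<bullet> (Q *v xs ! i))))"
      unfolding p_def Qlin
      by (simp add: inner_sum_left inner_sum_right sum_distrib_left mult_ac)
    also have "\<dots> = (\<Sum>n<k. \<Sum>i<k. xs ! i $ j * (xs ! n $ j * (xs ! n \<bullet> (Q *v xs ! i))))"
      by (rule sum.swap)
    also have "\<dots> = (\<Sum>i<k. \<Sum>l<k. (xs ! i) $ j * M i l * (xs ! l) $ j)"
      by (simp add: M_def mult_ac)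
    finally have val: "(\<Sum>i<k. \<Sum>l<k. (xs ! i) $ j * M i l * (xs ! l) $ j) = p \<bullet> (Q *v p)" by simp
    have pB: "p = (\<Sum>b\<in>B. (b $ j) *\<^sub>R b)" unfolding p_def by (rule listsum)
    define e :: "real^'n" where "e = axis j 1"
    have "orthogonal (e - p) y" if "y \<in> W" for y
    proof (rule orthogonal_to_span)
      show "y \<in> span B" using that spB by simp
    next
      fix b' assume b': "b' \<in> B"
      have "b' \<bullet> p = (\<Sum>b\<in>B. (b $ j) * (b' \<bullet> b))" by (simp add: pB inner_sum_right)
      also have "\<dots> = (\<Sum>b\<in>B. if b = b' then b $ j else 0)"
        by (intro sum.cong refl) (simp add: Bin b')
      also have "\<dots> = b' $ j" using fB b' by (simp add: sum.delta')
      finally have bp: "p \<bullet> b' = b' $ j" by (simp add: inner_commute)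
      show "orthogonal (e - p) b'"
        using bp by (simp add: orthogonal_def e_def inner_diff_left axis_inner)
    qed
    then have "e - p \<in> orthogonal_comp W"
      by (auto simp: orthogonal_comp_def orthogonal_commute)
    then have u: "e - p \<in> U" using orthogonal_comp_self[OF sU] W_def by simp
    define u where "u = e - p"
    have uU: "u \<in> U" using u by (simp add: u_def)
    have pe: "p = e - u" by (simp add: u_def)
    have "Q *v p = Q *v e" using QU[OF uU] by (simp add: pe matrix_vector_mult_diff_distrib)
    then have "p \<bullet> (Q *v p) = p \<bullet> (Q *v e)" by simp
    also have "\<dots> = e \<bullet> (Q *v e) - u \<bullet> (Q *v e)" by (simp add: pe inner_diff_left)
    also have "u \<bullet> (Q *v e) = 0" using inner_sym[OF sQ, of u e] QU[OF uU] by simp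
    also have "e \<bullet> (Q *v e) = 1" by (simp add: e_def axis_inner axis_mv dQ)
    finally show ?thesis using val by simp
  qed
  have "span (set xs) = orthogonal_comp U" using xs spB W_def by simp
  then show ?thesis unfolding ellipsoid_fitting_def
    using psdk ell k_def by blast
qed



lemma coord_bound: fixes c d e u w :: real
  assumes "e > 0" "c = d + e"
  shows "c*(u+w)^2 \<ge> d*w^2 - (\<bar>c\<bar> + c^2/e)*u^2"
proof -
  have "c*(u+w)^2 - (d*w^2 - (\<bar>c\<bar> + c^2/e)*u^2) = (e*w + c*u)^2/e + (c + \<bar>c\<bar>)*u^2"
    using assms by (simp add: field_simps power2_eq_square)
  moreover have "(e*w + c*u)^2/e + (c + \<bar>c\<bar>)*u^2 \<ge> 0"
    using assms(1) by (intro add_nonneg_nonneg) auto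
  ultimately show ?thesis by linarith
qed

lemma outer_scaled_mv: "(k *\<^sub>R outer v) *v x = (k * (v \<bullet> x)) *\<^sub>R v"
  by (simp add: scaleR_matrix_vector_assoc[symmetric] outer_mult)

lemma outer_sym1: "symmetric_mat (outer v)"
  using outer_sym[of 1 v] by simp

lemma diag_sym': "diagonal_mat D \<Longrightarrow> symmetric_mat D"
  by (auto simp: diagonal_mat_def sym_iff) (metis)

lemma diag_quad': "diagonal_mat D \<Longrightarrow> x \<bullet> (D *v y) = (\<Sum>j\<in>UNIV. D$j$j * x$j * y$j)"
proof -
  assume d: "diagonal_mat D"
  have "(D *v y)$i = D$i$i * y$i" for i
    using d unfolding diagonal_mat_def matrix_vector_mult_def
    by (simp add: sum.remove[of UNIV i] sum.neutral)
  then show ?thesis by (simp add: inner_vec_def mult_ac)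
qed

lemma onb_facts:
  fixes U :: "(real^'n) set"
  assumes sU: "subspace U"
  obtains B where "finite B" "B \<subseteq> U" "span B = U"
    "\<And>b b'. b \<in> B \<Longrightarrow> b' \<in> B \<Longrightarrow> b' \<bullet> b = (if b = b' then 1 else 0)"
proof -
  obtain B where BW: "B \<subseteq> U" and oB: "pairwise orthogonal B" and nB: "\<And>x. x \<in> B \<Longrightarrow> norm x = 1"
    and iB: "independent B" and spB: "span B = U"
    using orthonormal_basis_subspace[OF sU] by metis
  have fB: "finite B" using iB independent_imp_finite by blast
  have Bin: "\<And>b b'. b \<in> B \<Longrightarrow> b' \<in> B \<Longrightarrow> b' \<bullet> b = (if b = b' then 1 else 0)"
    using oB nB unfolding pairwise_def orthogonal_def
    by (metis norm_eq_1 inner_commute)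
  show ?thesis using that fB BW spB Bin by blast
qed

lemma proj_perp:
  fixes B :: "(real^'n) set"
  assumes fB: "finite B"
    and Bin: "\<And>b b'. b \<in> B \<Longrightarrow> b' \<in> B \<Longrightarrow> b' \<bullet> b = (if b = b' then 1 else 0)"
    and y: "y \<in> span B"
  shows "y \<bullet> (x - (\<Sum>b\<in>B. (b \<bullet> x) *\<^sub>R b)) = 0"
proof -
  have "orthogonal (x - (\<Sum>b\<in>B. (b \<bullet> x) *\<^sub>R b)) y"
  proof (rule orthogonal_to_span[OF y])
    fix b' assume b': "b' \<in> B"
    have "b' \<bullet> (\<Sum>b\<in>B. (b \<bullet> x) *\<^sub>R b) = (\<Sum>b\<in>B. (b \<bullet> x) * (b' \<bullet> b))"
      by (simp add: inner_sum_right)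
    also have "\<dots> = (\<Sum>b\<in>B. if b = b' then b \<bullet> x else 0)"
      by (intro sum.cong refl) (simp add: Bin b')
    also have "\<dots> = b' \<bullet> x" using fB b' by (simp add: sum.delta')
    finally have h: "b' \<bullet> (\<Sum>b\<in>B. (b \<bullet> x) *\<^sub>R b) = b' \<bullet> x" .
    show "orthogonal (x - (\<Sum>b\<in>B. (b \<bullet> x) *\<^sub>R b)) b'"
      unfolding orthogonal_def using h by (simp add: inner_diff_left inner_diff_right inner_commute[of _ b'])
  qed
  then show ?thesis by (simp add: orthogonal_def inner_commute)
qed

lemma recoverable_imp_realizable:
  fixes U :: "(real^'n) set"
  assumes sU: "subspace U" and rec: "recoverable U" shows "realizable U"
proof (rule ccontr)
  assume nr: "\<not> realizable U"
  define W where "W = orthogonal_comp U"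
  have sW: "subspace W" unfolding W_def by (rule subspace_orthogonal_comp)
  have WU: "\<And>w u. w \<in> W \<Longrightarrow> u \<in> U \<Longrightarrow> w \<bullet> u = 0"
    by (auto simp: W_def orthogonal_comp_def orthogonal_def inner_commute)
  define n where "n = real CARD('n)"
  have n0: "n > 0" by (simp add: n_def)
  have sumc: "(\<Sum>j\<in>(UNIV::'n set). k) = n * k" for k by (simp add: n_def)
  define f :: "real^'n \<Rightarrow> real^'n" where "f w = (\<chi> j. n * (w$j)^2)" for w
  define T where "T = f ` (W \<inter> sphere 0 1)"
  have cT: "compact T"
    unfolding T_def
  proof (rule compact_continuous_image)
    show "continuous_on (W \<inter> sphere 0 1) f"
      unfolding f_def by (intro continuous_intros)
    show "compact (W \<inter> sphere 0 1)"
      using compact_Int_closed[OF compact_sphere closed_subspace[OF sW]] by (simp add: Int_commute)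
  qed
  have one_notin: "(1::real^'n) \<notin> convex hull T"
  proof
    assume "(1::real^'n) \<in> convex hull T"
    then obtain S u where S: "finite S" "S \<subseteq> T" "\<forall>x\<in>S. 0 \<le> u x" "sum u S = 1"
      "(\<Sum>v\<in>S. u v *\<^sub>R v) = 1"
      unfolding convex_hull_explicit by blast
    have "\<forall>x\<in>S. \<exists>y. y \<in> W \<inter> sphere 0 1 \<and> f y = x" using S(2) unfolding T_def by blast
    then obtain g where g: "\<And>x. x \<in> S \<Longrightarrow> g x \<in> W \<inter> sphere 0 1 \<and> f (g x) = x" by metis
    define Q where "Q = (\<Sum>x\<in>S. (u x * n) *\<^sub>R outer (g x))"
    have Qmv: "Q *v y = (\<Sum>x\<in>S. (u x * n * (g x \<bullet> y)) *\<^sub>R g x)" for y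
      by (simp add: Q_def mv_sum outer_scaled_mv)
    have sQ: "symmetric_mat Q" unfolding Q_def by (intro sum_sym outer_sym)
    have qQ: "0 \<le> y \<bullet> (Q *v y)" for y
    proof -
      have "y \<bullet> (Q *v y) = (\<Sum>x\<in>S. u x * n * (g x \<bullet> y)^2)"
        by (simp add: Qmv inner_sum_right inner_commute power2_eq_square mult_ac)
      also have "\<dots> \<ge> 0" using S(3) n0 by (intro sum_nonneg) auto
      finally show ?thesis .
    qed
    have dQ: "Q$j$j = 1" for j
    proof -
      have "Q$j$j = (\<Sum>x\<in>S. u x * (n * (g x $ j)^2))"
        by (simp add: Q_def outer_def power2_eq_square mult_ac)
      also have "\<dots> = (\<Sum>x\<in>S. u x * x $ j)"
      proof (intro sum.cong refl)
        fix x assume "x \<in> S"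
        then have "f (g x) = x" using g by blast
        then have "x $ j = n * (g x $ j)^2" by (metis f_def vec_lambda_beta)
        then show "u x * (n * (g x $ j)^2) = u x * x $ j" by simp
      qed
      also have "\<dots> = (\<Sum>v\<in>S. u v *\<^sub>R v) $ j" by simp
      also have "\<dots> = 1" using S(5) by simp
      finally show ?thesis .
    qed
    have nQ: "U \<subseteq> null_space Q"
    proof
      fix y assume y: "y \<in> U"
      have "Q *v y = 0" unfolding Qmv
        by (intro sum.neutral ballI) (use g WU y in auto)
      then show "y \<in> null_space Q" by (simp add: null_space_def)
    qed
    have "realizable U" unfolding realizable_def correlation_mat_def psd_def
      using sQ qQ dQ nQ by blast
    then show False using nr by blast
  qed
  obtain a b where ab: "a \<bullet> (1::real^'n) < b" "\<And>x. x \<in> convex hull T \<Longrightarrow> a \<bullet> x > b"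
    using separating_hyperplane_closed_point[OF convex_convex_hull
        compact_imp_closed[OF compact_convex_hull[OF cT]] one_notin] by blast
  define d :: "real^'n" where "d = (\<chi> j. n * a$j - b)"
  have sd: "(\<Sum>j\<in>UNIV. d$j) < 0"
  proof -
    have "(\<Sum>j\<in>UNIV. d$j) = n * (a \<bullet> 1) - n * b"
      by (simp add: d_def sum_subtractf sum_distrib_left[symmetric] inner_vec_def sumc n_def)
    also have "\<dots> < 0" using ab(1) n0 by (simp add: algebra_simps)
    finally show ?thesis .
  qed
  have dW: "0 \<le> (\<Sum>j\<in>UNIV. d$j * (w$j)^2)" if w: "w \<in> W" for w
  proof (cases "w = 0")
    case True then show ?thesis by simp
  next
    case False
    define v where "v = w /\<^sub>R norm w"
    have nw: "norm w > 0" using False by simp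
    have vW: "v \<in> W \<inter> sphere 0 1"
      using False w subspace_scale[OF sW] by (auto simp: v_def)
    have "f v \<in> convex hull T" using vW unfolding T_def by (intro hull_inc imageI)
    then have gt: "a \<bullet> f v > b" by (rule ab(2))
    have vv: "(\<Sum>j\<in>UNIV. (v$j)^2) = 1"
    proof -
      have "(\<Sum>j\<in>UNIV. (v$j)^2) = v \<bullet> v" by (simp add: inner_vec_def power2_eq_square)
      also have "\<dots> = 1" using vW by (metis IntD2 dist_0_norm mem_sphere norm_eq_1)
      finally show ?thesis .
    qed
    have "(\<Sum>j\<in>UNIV. d$j * (v$j)^2) = a \<bullet> f v - b * (\<Sum>j\<in>UNIV. (v$j)^2)"
      by (simp add: d_def f_def inner_vec_def left_diff_distrib sum_subtractf sum_distrib_left mult_ac)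
    also have "\<dots> > 0" using gt vv by simp
    finally have pos: "(\<Sum>j\<in>UNIV. d$j * (v$j)^2) > 0" .
    have "(\<Sum>j\<in>UNIV. d$j * (w$j)^2) = (norm w)^2 * (\<Sum>j\<in>UNIV. d$j * (v$j)^2)"
      using nw by (simp add: v_def sum_distrib_left power_divide field_simps)
    also have "\<dots> \<ge> 0" using pos by simp
    finally show ?thesis .
  qed
  define eps where "eps = - (\<Sum>j\<in>UNIV. d$j) / (2*n)"
  have eps0: "eps > 0" using sd n0 by (simp add: eps_def divide_neg_pos)
  define c :: "real^'n" where "c = (\<chi> j. d$j + eps)"
  have sc: "(\<Sum>j\<in>UNIV. c$j) < 0"
  proof -
    have "(\<Sum>j\<in>UNIV. c$j) = (\<Sum>j\<in>UNIV. d$j) + n * eps"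
      by (simp add: c_def sum.distrib sumc n_def)
    also have "\<dots> = (\<Sum>j\<in>UNIV. d$j) / 2" using n0 by (simp add: eps_def)
    also have "\<dots> < 0" using sd by simp
    finally show ?thesis .
  qed
  define Cj where "Cj j = \<bar>c$j\<bar> + (c$j)^2/eps" for j
  have Cj0: "Cj j \<ge> 0" for j using eps0 by (simp add: Cj_def)
  define C where "C = 1 + (\<Sum>j\<in>UNIV. Cj j)"
  have C1: "C \<ge> 1" using Cj0 by (simp add: C_def sum_nonneg)
  define s where "s = 1 / C"
  have s0: "s > 0" using C1 by (simp add: s_def)
  have sC: "s * (C - 1) \<le> 1" using C1 by (simp add: s_def field_simps)
  define E :: "real^'n^'n" where "E = (\<chi> i j. if i = j then s * c$i else 0)"
  have dE: "diagonal_mat E" by (simp add: E_def diagonal_mat_def)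
  have dmE: "diagonal_mat (- E)" by (simp add: E_def diagonal_mat_def)
  have trE: "trace E = s * (\<Sum>j\<in>UNIV. c$j)" by (simp add: E_def trace_def sum_distrib_left)
  have qE: "x \<bullet> (E *v x) = s * (\<Sum>j\<in>UNIV. c$j * (x$j)^2)" for x
    unfolding diag_quad'[OF dE] by (simp add: E_def sum_distrib_left power2_eq_square mult_ac)
  obtain B where fB: "finite B" and BU: "B \<subseteq> U" and spB: "span B = U" and
    Bin: "\<And>b b'. b \<in> B \<Longrightarrow> b' \<in> B \<Longrightarrow> b' \<bullet> b = (if b = b' then 1 else 0)"
    using onb_facts[OF sU] by blast
  define L where "L = (\<Sum>b\<in>B. outer b)"
  have Lmv: "L *v x = (\<Sum>b\<in>B. (b \<bullet> x) *\<^sub>R b)" for x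
    by (simp add: L_def mv_sum outer_mult)
  have LU: "L *v x \<in> U" for x
    unfolding Lmv using BU
    by (intro subspace_sum[OF sU] subspace_scale[OF sU]) auto
  have perp: "x - L *v x \<in> W" for x
  proof -
    have "y \<bullet> (x - L *v x) = 0" if "y \<in> U" for y
      unfolding Lmv using proj_perp[OF fB Bin, of y x] that spB by simp
    then show ?thesis by (auto simp: W_def orthogonal_comp_def orthogonal_def)
  qed
  have sL: "symmetric_mat L" unfolding L_def by (intro sum_sym outer_sym1)
  have qL: "x \<bullet> (L *v x) = (L *v x) \<bullet> (L *v x)" for x
  proof -
    have "(x - L *v x) \<bullet> (L *v x) = 0" using WU[OF perp LU] .
    then show ?thesis by (simp add: inner_diff_left)
  qed
  have pL: "psd L" using sL qL by (simp add: psd_def)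
  have colL: "col_space L = U"
  proof
    show "col_space L \<subseteq> U" using LU by (auto simp: col_space_def)
    show "U \<subseteq> col_space L"
    proof
      fix y assume y: "y \<in> U"
      have "y - L *v y \<in> U" using y LU by (intro subspace_diff[OF sU])
      then have "(y - L *v y) \<bullet> (y - L *v y) = 0" using WU[OF perp] by blast
      then have "y = L *v y" by simp
      then show "y \<in> col_space L" by (auto simp: col_space_def)
    qed
  qed
  have opt: "mtfa_unique_opt (0 + L) 0 L"
  proof -
    have "diagonal_mat (0::real^'n^'n)" by (simp add: diagonal_mat_def)
    then show ?thesis using rec pL colL unfolding recoverable_def by blast
  qed
  have pLE: "psd (L + E)"
    unfolding psd_def
  proof (intro conjI allI)
    show "symmetric_mat (L + E)" using sL diag_sym'[OF dE] by (simp add: sym_iff)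
  next
    fix x :: "real^'n"
    define u where "u = L *v x"
    define w where "w = x - u"
    have wW: "w \<in> W" using perp by (simp add: w_def u_def)
    have xuw: "x$j = u$j + w$j" for j by (simp add: w_def)
    have A: "(\<Sum>j\<in>UNIV. d$j * (w$j)^2 - Cj j * (u$j)^2) \<le> (\<Sum>j\<in>UNIV. c$j * (x$j)^2)"
      unfolding xuw Cj_def
      by (intro sum_mono coord_bound[OF eps0]) (simp add: c_def)
    have B: "(\<Sum>j\<in>UNIV. d$j * (w$j)^2 - Cj j * (u$j)^2) =
        (\<Sum>j\<in>UNIV. d$j * (w$j)^2) - (\<Sum>j\<in>UNIV. Cj j * (u$j)^2)"
      by (simp add: sum_subtractf)
    have "(u$j)^2 \<le> u \<bullet> u" for j
    proof -
      have "(u$j)^2 \<le> (\<Sum>i\<in>UNIV. (u$i)^2)" by (rule member_le_sum) auto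
      then show ?thesis by (simp add: inner_vec_def power2_eq_square)
    qed
    then have Cb: "(\<Sum>j\<in>UNIV. Cj j * (u$j)^2) \<le> (\<Sum>j\<in>UNIV. Cj j * (u \<bullet> u))"
      using Cj0 by (intro sum_mono mult_left_mono) auto
    have Ce: "(\<Sum>j\<in>UNIV. Cj j * (u \<bullet> u)) = (C - 1) * (u \<bullet> u)"
      by (simp add: C_def sum_distrib_right)
    have h1: "- ((C - 1) * (u \<bullet> u)) \<le> (\<Sum>j\<in>UNIV. c$j * (x$j)^2)"
      using A B Cb Ce dW[OF wW] by linarith
    have "x \<bullet> ((L + E) *v x) = u \<bullet> u + s * (\<Sum>j\<in>UNIV. c$j * (x$j)^2)"
      by (simp add: matrix_vector_mult_add_rdistrib inner_add_right qL qE u_def)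
    moreover have "s * (- ((C - 1) * (u \<bullet> u))) \<le> s * (\<Sum>j\<in>UNIV. c$j * (x$j)^2)"
      using mult_left_mono[OF h1, of s] s0 by simp
    moreover have "0 \<le> (1 - s * (C - 1)) * (u \<bullet> u)" using sC by simp
    moreover have "(1 - s * (C - 1)) * (u \<bullet> u) = u \<bullet> u + s * (- ((C - 1) * (u \<bullet> u)))"
      by (simp add: algebra_simps)
    ultimately have "0 \<le> x \<bullet> ((L + E) *v x)" by linarith
    then show "0 \<le> x \<bullet> ((L + E) *v x)" .
  qed
  have feas: "mtfa_feasible (0 + L) (- E) (L + E)"
    unfolding mtfa_feasible_def
    using pLE dmE diag_sym'[OF dmE] by (auto simp: psd_def)
  then have "trace L \<le> trace (L + E)" using opt unfolding mtfa_unique_opt_def by blast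
  moreover have "trace (L + E) = trace L + s * (\<Sum>j\<in>UNIV. c$j)"
    by (simp add: trace_def sum.distrib trE[unfolded trace_def])
  moreover have "s * (\<Sum>j\<in>UNIV. c$j) < 0" using s0 sc by (simp add: mult_pos_neg)
  ultimately show False by simp
qed


theorem proposition3p1:
  fixes U :: "(real^'n) set"
  assumes "subspace U"
  shows "(recoverable U \<longleftrightarrow> realizable U) \<and>
         (realizable U \<longleftrightarrow> ellipsoid_fitting (orthogonal_comp U))"
  using realizable_imp_recoverable recoverable_imp_realizable[OF assms]
    realizable_imp_ellipsoid[OF assms] ellipsoid_imp_realizable by blast

end
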